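(* Let $\beta\in(0,1/2)$, $N=2^n$, $\delta_N=2^{-N^\beta}$. Let $(V,X,Z)$ be random variables with $V\in\{0,1\}$ and $X,Z$ taking values in finite alphabets $\mathcal X,\mathcal Z$, and let $P=P_{V^NX^NZ^N}$ be the distribution of $N$ i.i.d. copies of $(V,X,Z)$. Put $T^N=V^NG_N$ and $$\mathcal H_{V|Z}=\{i\in[N]:\ Z(T_i\mid T^{i-1},Z^N)\ge 1-\delta_N\},$$ the Bhattacharyya parameters being computed under $P$. Let $Q=Q_{V^NX^NZ^N}$ be any distribution on $\{0,1\}^N\times\mathcal X^N\times\mathcal Z^N$ with $\|P-Q\|_1\le N2^{-N^\beta}$, and under $Q$ again set $T^N=V^NG_N$. Let $\mathcal I\subseteq\mathcal H_{V|Z}$ and $\mathcal A\subseteq\mathcal I$, and write $T[\mathcal S]=(T_i)_{i\in\mathcal S}$. Then, with mutual information computed under $Q$, $$I\big(T[\mathcal I\setminus\mathcal A];\,T[\mathcal A],Z^N\big)=O\big(N^3 2^{-N^\beta}\big),$$ where the implied constant depends only on $|\mathcal Z|$ (and the bound holds for all sufficiently large $N$).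
   Context: $G_N=B_NF^{\otimes n}$ is Arıkan's polarizing matrix over $\mathbb F_2$: $F=\begin{pmatrix}1&0\\1&1\end{pmatrix}$, $\otimes$ is the Kronecker product and $B_N$ is the bit-reversal permutation matrix; $V^NG_N$ is computed over $\mathbb F_2$. For a binary random variable $A$ and a discrete random variable $B$, the Bhattacharyya parameter is $Z(A\mid B)=2\sum_b P_B(b)\sqrt{P_{A|B}(0|b)P_{A|B}(1|b)}$. $T^{i-1}=(T_1,\dots,T_{i-1})$, $[N]=\{1,\dots,N\}$, $\|\cdot\|_1$ is the $\ell_1$ distance between distributions, and logarithms are base 2. *)

theory Defs
  imports "HOL-Probability.Probability"
begin

section \<open>Arikan's polarizing matrix G_N = B_N F^{(tensor n)} over F_2 (0-based indices)\<close>

text \<open>The kernel F = ((1,0),(1,1)); entries as booleans (True = 1 in F_2).\<close>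
definition arikanF :: "nat \<Rightarrow> nat \<Rightarrow> bool" where
  "arikanF a b = ((a = 0 \<and> b = 0) \<or> (a = 1 \<and> b = 0) \<or> (a = 1 \<and> b = 1))"

text \<open>Kronecker power: F^(tensor (n+1)) = F tensor F^(tensor n), entries indexed by 0..2^n-1.\<close>
fun kronF :: "nat \<Rightarrow> nat \<Rightarrow> nat \<Rightarrow> bool" where
  "kronF 0 i j = (i = 0 \<and> j = 0)"
| "kronF (Suc n) i j = (arikanF (i div 2^n) (j div 2^n) \<and> kronF n (i mod 2^n) (j mod 2^n))"

definition bitrev :: "nat \<Rightarrow> nat \<Rightarrow> nat" where
  "bitrev n i = (\<Sum>k<n. if bit i k then 2^(n - 1 - k) else 0)"

text \<open>B_N is the permutation matrix with (B_N)_{i,bitrev i} = 1, so (B_N M)_{ij} = M_{bitrev i, j}.\<close>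
definition arikanG :: "nat \<Rightarrow> nat \<Rightarrow> nat \<Rightarrow> bool" where
  "arikanG n i j = kronF n (bitrev n i) j"

text \<open>Row vector times G_N over F_2: (v G_N)_j = sum_i v_i (G_N)_{ij} mod 2.\<close>
definition polar :: "nat \<Rightarrow> bool list \<Rightarrow> bool list" where
  "polar n v = map (\<lambda>j. odd (card {i. i < 2^n \<and> v ! i \<and> arikanG n i j})) [0..<2^n]"

definition bhatt :: "'w pmf \<Rightarrow> ('w \<Rightarrow> bool) \<Rightarrow> ('w \<Rightarrow> 'b) \<Rightarrow> real" where
  "bhatt M A B = 2 * (\<Sum>b\<in>set_pmf (map_pmf B M).
      pmf (map_pmf B M) b *
      sqrt ((pmf (map_pmf (\<lambda>w. (A w, B w)) M) (False, b) / pmf (map_pmf B M) b) *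
            (pmf (map_pmf (\<lambda>w. (A w, B w)) M) (True, b) / pmf (map_pmf B M) b)))"

definition mutinf :: "'w pmf \<Rightarrow> ('w \<Rightarrow> 'a) \<Rightarrow> ('w \<Rightarrow> 'b) \<Rightarrow> real" where
  "mutinf M A B = (\<Sum>(a, b)\<in>set_pmf (map_pmf (\<lambda>w. (A w, B w)) M).
      pmf (map_pmf (\<lambda>w. (A w, B w)) M) (a, b) *
      log 2 (pmf (map_pmf (\<lambda>w. (A w, B w)) M) (a, b) /
             (pmf (map_pmf A M) a * pmf (map_pmf B M) b)))"

definition l1dist :: "'w pmf \<Rightarrow> 'w pmf \<Rightarrow> real" where
  "l1dist P Q = (\<Sum>w\<in>set_pmf P \<union> set_pmf Q. \<bar>pmf P w - pmf Q w\<bar>)"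

definition iid :: "nat \<Rightarrow> (bool \<times> 'x \<times> 'z) pmf \<Rightarrow> (bool list \<times> 'x list \<times> 'z list) pmf" where
  "iid N p = map_pmf (\<lambda>ws. (map fst ws, map (fst \<circ> snd) ws, map (snd \<circ> snd) ws)) (replicate_pmf N p)"

definition space :: "nat \<Rightarrow> 'x set \<Rightarrow> (bool list \<times> 'x list \<times> 'z list) set" where
  "space N Xs = {(v, x, z). length v = N \<and> length x = N \<and> set x \<subseteq> Xs \<and> length z = N}"

definition Tvec :: "nat \<Rightarrow> bool list \<times> 'x list \<times> 'z list \<Rightarrow> bool list" where
  "Tvec n w = polar n (fst w)"

text \<open>T[S] = (T_i)_{i in S}, with 1-based indices i in [N].\<close>
definition Tsub :: "nat \<Rightarrow> nat set \<Rightarrow> bool list \<times> 'x list \<times> 'z list \<Rightarrow> (nat \<Rightarrow> bool)" where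
  "Tsub n S w = restrict (\<lambda>i. Tvec n w ! (i - 1)) S"

definition Hset :: "nat \<Rightarrow> real \<Rightarrow> (bool list \<times> 'x list \<times> 'z list) pmf \<Rightarrow> nat set" where
  "Hset n \<delta> P = {i \<in> {1..2^n}.
      bhatt P (\<lambda>w. Tvec n w ! (i - 1)) (\<lambda>w. (take (i - 1) (Tvec n w), snd (snd w))) \<ge> 1 - \<delta>}"

end

theory Submission
  imports Defs
begin

definition RS :: "'w pmf \<Rightarrow> 'w measure" where
  "RS P = restrict_space (measure_pmf P) (set_pmf P)"

lemma space_RS[simp]: "Sigma_Algebra.space (RS P) = set_pmf P"
  by (simp add: RS_def space_restrict_space)

lemma sets_RS[simp]: "sets (RS P) = Pow (set_pmf P)"
  by (auto simp: RS_def sets_restrict_space)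

lemma info_RS: "information_space (RS P) 2"
proof -
  have "prob_space (RS P)" unfolding RS_def
    by (intro prob_space_restrict_space measure_pmf.emeasure_eq_1_AE) (auto simp: AE_measure_pmf_iff)
  then show ?thesis by (simp add: information_space_def information_space_axioms_def)
qed

lemma measure_RS: "A \<subseteq> set_pmf P \<Longrightarrow> measure (RS P) A = measure_pmf.prob P A"
  unfolding RS_def by (rule measure_restrict_space) auto

lemma sf_RS: "finite (set_pmf P) \<Longrightarrow> simple_function (RS P) F"
  by (auto simp: simple_function_def)

lemma pmf_map_RS: "pmf (map_pmf F P) x = measure (RS P) (F -` {x} \<inter> Sigma_Algebra.space (RS P))"
proof -
  have "pmf (map_pmf F P) x = measure_pmf.prob P (F -` {x})" by (rule pmf_map)
  also have "\<dots> = measure_pmf.prob P (F -` {x} \<inter> set_pmf P)"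
    by (simp add: measure_Int_set_pmf)
  also have "\<dots> = measure (RS P) (F -` {x} \<inter> set_pmf P)" by (simp add: measure_RS)
  finally show ?thesis by simp
qed

lemma sd_RS: "finite (set_pmf P) \<Longrightarrow> simple_distributed (RS P) F (pmf (map_pmf F P))"
proof -
  assume f: "finite (set_pmf P)"
  interpret information_space "RS P" 2 by (rule info_RS)
  show ?thesis by (rule simple_distributedI) (auto simp: sf_RS[OF f] pmf_map_RS)
qed

definition ent :: "'w pmf \<Rightarrow> ('w \<Rightarrow> 'a) \<Rightarrow> real" where
  "ent P F = - (\<Sum>x\<in>set_pmf (map_pmf F P). pmf (map_pmf F P) x * log 2 (pmf (map_pmf F P) x))"

abbreviation H where "H P F \<equiv> prob_space.entropy (RS P) 2 (count_space (F ` set_pmf P)) F"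

lemma ent_H: "finite (set_pmf P) \<Longrightarrow> ent P F = H P F"
proof -
  assume f: "finite (set_pmf P)"
  interpret information_space "RS P" 2 by (rule info_RS)
  show ?thesis using entropy_simple_distributed[OF sd_RS[OF f, of F]]
    by (simp add: ent_def)
qed

lemma mutinf_I: "finite (set_pmf P) \<Longrightarrow> mutinf P A B =
   prob_space.mutual_information (RS P) (2::real) (count_space (A ` set_pmf P)) (count_space (B ` set_pmf P)) A B"
proof -
  assume f: "finite (set_pmf P)"
  interpret information_space "RS P" 2 by (rule info_RS)
  show ?thesis using mutual_information_simple_distributed[OF sd_RS[OF f, of A] sd_RS[OF f, of B] sd_RS[OF f, of "\<lambda>x. (A x, B x)"]]
    by (simp add: mutinf_def)
qed

lemma EX: "finite (set_pmf P) \<Longrightarrow>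
  (\<Sum>u\<in>set_pmf (map_pmf F P). pmf (map_pmf F P) u * g u) = (\<Sum>w\<in>set_pmf P. pmf P w * g (F w))"
proof -
  assume f: "finite (set_pmf P)"
  have "(\<Sum>u\<in>set_pmf (map_pmf F P). pmf (map_pmf F P) u * g u) = measure_pmf.expectation (map_pmf F P) g"
    by (subst integral_measure_pmf_real[where A="set_pmf (map_pmf F P)"]) (auto simp: f mult.commute)
  also have "\<dots> = measure_pmf.expectation P (\<lambda>w. g (F w))" by simp
  also have "\<dots> = (\<Sum>w\<in>set_pmf P. pmf P w * g (F w))"
    by (subst integral_measure_pmf_real[where A="set_pmf P"]) (auto simp: f mult.commute)
  finally show ?thesis .
qed

lemma pmf_map_pos: "w \<in> set_pmf P \<Longrightarrow> pmf (map_pmf F P) (F w) > 0"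
  by (simp add: pmf_positive)

lemma ent_EX: "finite (set_pmf P) \<Longrightarrow> ent P F = - (\<Sum>w\<in>set_pmf P. pmf P w * log 2 (pmf (map_pmf F P) (F w)))"
  unfolding ent_def by (subst EX) auto

lemma mutinf_ent: assumes f: "finite (set_pmf P)"
  shows "mutinf P A B = ent P A + ent P B - ent P (\<lambda>w. (A w, B w))"
proof -
  have "mutinf P A B = (\<Sum>u\<in>set_pmf (map_pmf (\<lambda>w. (A w, B w)) P). pmf (map_pmf (\<lambda>w. (A w, B w)) P) u *
      (case u of (a, b) \<Rightarrow> log 2 (pmf (map_pmf (\<lambda>w. (A w, B w)) P) (a, b) /
             (pmf (map_pmf A P) a * pmf (map_pmf B P) b))))"
    unfolding mutinf_def by (intro sum.cong) auto
  also have "\<dots> = (\<Sum>w\<in>set_pmf P. pmf P w * log 2 (pmf (map_pmf (\<lambda>w. (A w, B w)) P) (A w, B w) /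
             (pmf (map_pmf A P) (A w) * pmf (map_pmf B P) (B w))))"
    by (subst EX[OF f]) (simp only: case_prod_conv)
  also have "\<dots> = (\<Sum>w\<in>set_pmf P. pmf P w * log 2 (pmf (map_pmf (\<lambda>w. (A w, B w)) P) (A w, B w))
        - pmf P w * log 2 (pmf (map_pmf A P) (A w)) - pmf P w * log 2 (pmf (map_pmf B P) (B w)))"
  proof (intro sum.cong refl)
    fix w assume w: "w \<in> set_pmf P"
    have p1: "pmf (map_pmf (\<lambda>w. (A w, B w)) P) (A w, B w) > 0"
      using pmf_map_pos[OF w, of "\<lambda>w. (A w, B w)"] by simp
    have p2: "pmf (map_pmf A P) (A w) > 0" "pmf (map_pmf B P) (B w) > 0"
      using pmf_map_pos[OF w] by auto
    show "pmf P w * log 2 (pmf (map_pmf (\<lambda>w. (A w, B w)) P) (A w, B w) /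
             (pmf (map_pmf A P) (A w) * pmf (map_pmf B P) (B w))) = 
        pmf P w * log 2 (pmf (map_pmf (\<lambda>w. (A w, B w)) P) (A w, B w))
        - pmf P w * log 2 (pmf (map_pmf A P) (A w)) - pmf P w * log 2 (pmf (map_pmf B P) (B w))"
    proof -
      have "log 2 (pmf (map_pmf (\<lambda>w. (A w, B w)) P) (A w, B w) /
             (pmf (map_pmf A P) (A w) * pmf (map_pmf B P) (B w))) =
         log 2 (pmf (map_pmf (\<lambda>w. (A w, B w)) P) (A w, B w)) - log 2 (pmf (map_pmf A P) (A w))
           - log 2 (pmf (map_pmf B P) (B w))"
        using p1 p2 by (simp add: log_divide log_mult)
      then show ?thesis by (simp add: right_diff_distrib)
    qed
  qed
  also have "\<dots> = ent P A + ent P B - ent P (\<lambda>w. (A w, B w))"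
    unfolding ent_EX[OF f] sum_subtractf by simp
  finally show ?thesis .
qed

lemma mutinf_nonneg: "finite (set_pmf P) \<Longrightarrow> mutinf P A B \<ge> 0"
proof -
  assume f: "finite (set_pmf P)"
  interpret information_space "RS P" 2 by (rule info_RS)
  show ?thesis unfolding mutinf_I[OF f]
    using mutual_information_nonneg_simple[OF sf_RS[OF f] sf_RS[OF f]] by simp
qed

lemma ent_sub: "finite (set_pmf P) \<Longrightarrow> ent P (\<lambda>w. (A w, B w)) \<le> ent P A + ent P B"
  using mutinf_nonneg[of P A B] mutinf_ent[of P A B] by simp

lemma ent_card: "finite (set_pmf P) \<Longrightarrow> ent P F \<le> log 2 (card (F ` set_pmf P))"
proof -
  assume f: "finite (set_pmf P)"
  interpret information_space "RS P" 2 by (rule info_RS)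
  show ?thesis unfolding ent_H[OF f]
    using entropy_le_card[OF sd_RS[OF f, of F]] by simp
qed

lemma ent_inj: "finite (set_pmf P) \<Longrightarrow> inj_on f (F ` set_pmf P) \<Longrightarrow> ent P (\<lambda>w. f (F w)) = ent P F"
proof -
  assume f: "finite (set_pmf P)" and i: "inj_on f (F ` set_pmf P)"
  interpret information_space "RS P" 2 by (rule info_RS)
  show ?thesis unfolding ent_H[OF f]
    using entropy_of_inj[OF sf_RS[OF f, of F], of f] i by (simp add: comp_def)
qed

lemma ent_proc: "finite (set_pmf P) \<Longrightarrow> ent P (\<lambda>w. f (F w)) \<le> ent P F"
proof -
  assume f: "finite (set_pmf P)"
  interpret information_space "RS P" 2 by (rule info_RS)
  show ?thesis unfolding ent_H[OF f]
    using entropy_data_processing[OF sf_RS[OF f, of F], of f] by (simp add: comp_def)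
qed

lemma ent_cong: "(\<And>w. w \<in> set_pmf P \<Longrightarrow> F w = G w) \<Longrightarrow> ent P F = ent P G"
proof -
  assume "\<And>w. w \<in> set_pmf P \<Longrightarrow> F w = G w"
  then have "map_pmf F P = map_pmf G P" by (intro map_pmf_cong) auto
  then show ?thesis unfolding ent_def by simp
qed

lemma ent_submod: assumes f: "finite (set_pmf P)"
  shows "ent P (\<lambda>w. (A w, B w, C w)) + ent P C \<le> ent P (\<lambda>w. (A w, C w)) + ent P (\<lambda>w. (B w, C w))"
proof -
  interpret information_space "RS P" 2 by (rule info_RS)
  define pz where "pz = pmf (map_pmf C P)"
  define pyz where "pyz = pmf (map_pmf (\<lambda>w. (B w, C w)) P)"
  define pxz where "pxz = pmf (map_pmf (\<lambda>w. (A w, C w)) P)"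
  define pxyz where "pxyz = pmf (map_pmf (\<lambda>w. (A w, B w, C w)) P)"
  have "0 \<le> conditional_mutual_information 2 (count_space (A ` set_pmf P)) (count_space (B ` set_pmf P)) (count_space (C ` set_pmf P)) A B C"
    using conditional_mutual_information_nonneg[OF sf_RS[OF f, of A] sf_RS[OF f, of B] sf_RS[OF f, of C]] by simp
  also have "conditional_mutual_information 2 (count_space (A ` set_pmf P)) (count_space (B ` set_pmf P)) (count_space (C ` set_pmf P)) A B C = (\<Sum>(x, y, z)\<in>(\<lambda>x. (A x, B x, C x))`set_pmf P.
      pxyz (x, y, z) * log 2 (pxyz (x, y, z) / (pxz (x, z) * (pyz (y,z) / pz z))))"
    using conditional_mutual_information_eq[OF sd_RS[OF f, of C] sd_RS[OF f, of "\<lambda>w. (B w, C w)"]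
       sd_RS[OF f, of "\<lambda>w. (A w, C w)"] sd_RS[OF f, of "\<lambda>w. (A w, B w, C w)"]]
    unfolding pz_def pyz_def pxz_def pxyz_def by simp
  also have "\<dots> = (\<Sum>u\<in>set_pmf (map_pmf (\<lambda>w. (A w, B w, C w)) P). pmf (map_pmf (\<lambda>w. (A w, B w, C w)) P) u *
      (case u of (x, y, z) \<Rightarrow> log 2 (pxyz (x, y, z) / (pxz (x, z) * (pyz (y,z) / pz z)))))"
    unfolding pxyz_def by (intro sum.cong) auto
  also have "\<dots> = (\<Sum>w\<in>set_pmf P. pmf P w * log 2 (pxyz (A w, B w, C w) / (pxz (A w, C w) * (pyz (B w, C w) / pz (C w)))))"
    by (subst EX[OF f]) (simp only: case_prod_conv)
  also have "\<dots> = (\<Sum>w\<in>set_pmf P. pmf P w * log 2 (pxyz (A w, B w, C w)) - pmf P w * log 2 (pxz (A w, C w))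
      - pmf P w * log 2 (pyz (B w, C w)) + pmf P w * log 2 (pz (C w)))"
  proof (intro sum.cong refl)
    fix w assume w: "w \<in> set_pmf P"
    have p: "pxyz (A w, B w, C w) > 0" "pxz (A w, C w) > 0" "pyz (B w, C w) > 0" "pz (C w) > 0"
      unfolding pxyz_def pxz_def pyz_def pz_def using pmf_map_pos[OF w] by auto
    have "log 2 (pxyz (A w, B w, C w) / (pxz (A w, C w) * (pyz (B w, C w) / pz (C w)))) =
       log 2 (pxyz (A w, B w, C w)) - log 2 (pxz (A w, C w)) - log 2 (pyz (B w, C w)) + log 2 (pz (C w))"
      using p by (simp add: log_divide log_mult)
    then show "pmf P w * log 2 (pxyz (A w, B w, C w) / (pxz (A w, C w) * (pyz (B w, C w) / pz (C w)))) =
      pmf P w * log 2 (pxyz (A w, B w, C w)) - pmf P w * log 2 (pxz (A w, C w))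
      - pmf P w * log 2 (pyz (B w, C w)) + pmf P w * log 2 (pz (C w))"
      by (simp add: distrib_left right_diff_distrib)
  qed
  also have "\<dots> = ent P (\<lambda>w. (A w, C w)) + ent P (\<lambda>w. (B w, C w)) - ent P (\<lambda>w. (A w, B w, C w)) - ent P C"
    unfolding ent_EX[OF f] sum_subtractf sum.distrib pz_def pyz_def pxz_def pxyz_def by simp
  finally show ?thesis by simp
qed


lemma phi_lower: fixes a d :: real assumes "0 \<le> a" "0 \<le> d"
  shows "a * ln a + d * ln d \<le> (a + d) * ln (a + d)"
proof -
  have "a * ln a \<le> a * ln (a + d)"
  proof (cases "a = 0")
    case False then show ?thesis using assms by (intro mult_left_mono) auto
  qed simp
  moreover have "d * ln d \<le> d * ln (a + d)"
  proof (cases "d = 0")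
    case False then show ?thesis using assms by (intro mult_left_mono) auto
  qed simp
  ultimately show ?thesis by (simp add: distrib_right)
qed

lemma phi_upper: fixes a d :: real assumes "0 \<le> a" "0 \<le> d" "a + d \<le> 1"
  shows "(a + d) * ln (a + d) - a * ln a \<le> d"
proof (cases "a = 0")
  case True
  have "d * ln d \<le> 0"
  proof (cases "d = 0")
    case False then have "ln d \<le> 0" using assms True by simp
    then show ?thesis using assms by (simp add: mult_nonneg_nonpos)
  qed simp
  then show ?thesis using True assms by simp
next
  case False
  then have a: "a > 0" using assms by simp
  have "ln ((a + d) / a) \<le> (a + d) / a - 1" by (rule ln_le_minus_one) (use a assms in simp)
  then have "a * ln ((a + d) / a) \<le> a * ((a + d) / a - 1)" using a by (intro mult_left_mono) auto
  also have "\<dots> = d" using a by (simp add: field_simps)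
  finally have 1: "a * (ln (a + d) - ln a) \<le> d" using a assms by (simp add: ln_div)
  have "ln (a + d) \<le> 0" using a assms by simp
  then have 2: "d * ln (a + d) \<le> 0" using assms by (simp add: mult_nonneg_nonpos)
  show ?thesis using 1 2 by (simp add: algebra_simps)
qed

lemma phi_diff: fixes a b :: real assumes "0 \<le> a" "0 \<le> b" "a \<le> 1" "b \<le> 1"
  shows "\<bar>a * ln a - b * ln b\<bar> \<le> - (\<bar>a - b\<bar> * ln \<bar>a - b\<bar>) + \<bar>a - b\<bar>"
proof -
  have key: "\<bar>(x + d) * ln (x + d) - x * ln x\<bar> \<le> - (d * ln d) + d" if "0 \<le> x" "0 \<le> d" "x + d \<le> 1" for x d :: real
  proof -
    have "d * ln d \<le> 0"
    proof (cases "d = 0")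
      case False then have "ln d \<le> 0" using that by simp
      then show ?thesis using that by (simp add: mult_nonneg_nonpos)
    qed simp
    then show ?thesis using phi_lower[OF that(1,2)] phi_upper[OF that] that unfolding abs_le_iff by linarith
  qed
  show ?thesis
  proof (cases "a \<le> b")
    case True
    then show ?thesis using key[of a "b - a"] assms by (simp add: abs_minus_commute)
  next
    case False
    then show ?thesis using key[of b "a - b"] assms by (simp add: abs_minus_commute)
  qed
qed

lemma psi_mono: fixes x y :: real assumes "0 \<le> x" "x \<le> y" "y \<le> exp (-1)"
  shows "- (x * ln x) \<le> - (y * ln y)"
proof (cases "x = 0")
  case True
  have "y \<le> 1" using assms(3) by (smt (verit) exp_le_one_iff)
  then have "y * ln y \<le> 0" using assms True by (cases "y = 0") (auto simp: mult_nonneg_nonpos)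
  then show ?thesis using True by simp
next
  case False
  then have x: "x > 0" using assms by simp
  then have y: "y > 0" using assms by simp
  have "ln (y / x) \<le> y / x - 1" by (rule ln_le_minus_one) (use x y in simp)
  then have "x * ln (y / x) \<le> x * (y / x - 1)" using x by (intro mult_left_mono) auto
  also have "\<dots> = y - x" using x by (simp add: field_simps)
  finally have 1: "x * (ln y - ln x) \<le> y - x" using x y by (simp add: ln_div)
  have "ln y \<le> ln (exp (-1))" using y assms by (subst ln_le_cancel_iff) auto
  then have "ln y \<le> -1" by simp
  then have 2: "(y - x) * (ln y + 1) \<le> 0" using assms by (intro mult_nonneg_nonpos) auto
  show ?thesis using 1 2 by (simp add: algebra_simps)
qed

lemma psi_sum: fixes d :: "'a \<Rightarrow> real" and U :: "'a set" and \<epsilon> K :: real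
  assumes "finite U" "real (card U) \<le> K" "1 \<le> K" "\<And>u. u \<in> U \<Longrightarrow> 0 \<le> d u"
    "sum d U \<le> \<epsilon>" "0 < \<epsilon>" "\<epsilon> \<le> 1/4"
  shows "(\<Sum>u\<in>U. - (d u * ln (d u))) \<le> 2 * \<epsilon> * ln (K / \<epsilon>)"
proof -
  define \<tau> where "\<tau> = \<epsilon> / K"
  have tpos: "\<tau> > 0" using assms by (simp add: \<tau>_def)
  have tle: "\<tau> \<le> \<epsilon>" using assms by (simp add: \<tau>_def divide_le_eq_1 field_simps)
  have e4: "1/4 \<le> exp (-1::real)"
  proof -
    have "exp (1::real) \<le> 4" using exp_le by simp
    then have "1 / exp 1 \<ge> (1/4::real)" by (simp add: field_simps)
    then show ?thesis by (simp add: exp_minus field_simps)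
  qed
  have te: "\<tau> \<le> exp (-1)" using tle assms e4 by linarith
  have lnt: "ln (1 / \<tau>) \<ge> 0" using tpos tle assms by simp
  have psit: "- (\<tau> * ln \<tau>) \<ge> 0"
  proof -
    have "ln \<tau> \<le> 0" using tpos tle assms by simp
    then show ?thesis using tpos by (simp add: mult_nonneg_nonpos)
  qed
  have each: "- (d u * ln (d u)) \<le> d u * ln (1 / \<tau>) + - (\<tau> * ln \<tau>)" if u: "u \<in> U" for u
  proof (cases "d u \<ge> \<tau>")
    case True
    then have "ln \<tau> \<le> ln (d u)" using tpos by simp
    then have "- (d u * ln (d u)) \<le> d u * ln (1 / \<tau>)" using assms(4)[OF u] tpos
      by (simp add: ln_div mult_left_mono)
    then show ?thesis using psit by linarith
  next
    case False
    then have "- (d u * ln (d u)) \<le> - (\<tau> * ln \<tau>)" using psi_mono[of "d u" \<tau>] assms(4)[OF u] te by simp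
    moreover have "d u * ln (1 / \<tau>) \<ge> 0" using assms(4)[OF u] lnt by simp
    ultimately show ?thesis by linarith
  qed
  have "(\<Sum>u\<in>U. - (d u * ln (d u))) \<le> (\<Sum>u\<in>U. d u * ln (1 / \<tau>) + - (\<tau> * ln \<tau>))"
    by (rule sum_mono) (rule each)
  also have "\<dots> = sum d U * ln (1 / \<tau>) + real (card U) * (- (\<tau> * ln \<tau>))"
    by (simp add: sum_subtractf sum_distrib_right)
  also have "\<dots> \<le> \<epsilon> * ln (1 / \<tau>) + K * (- (\<tau> * ln \<tau>))"
    using assms lnt psit by (intro add_mono mult_right_mono) auto
  also have "\<dots> = 2 * \<epsilon> * ln (K / \<epsilon>)"
    using assms tpos by (simp add: \<tau>_def ln_div field_simps)
  finally show ?thesis .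
qed

lemma pmf_map_sum: assumes "finite S" "set_pmf P \<subseteq> S"
  shows "pmf (map_pmf F P) u = (\<Sum>w\<in>{w\<in>S. F w = u}. pmf P w)"
proof -
  have "pmf (map_pmf F P) u = measure_pmf.prob P (F -` {u})" by (rule pmf_map)
  also have "\<dots> = measure_pmf.prob P (F -` {u} \<inter> set_pmf P)" by (simp add: measure_Int_set_pmf)
  also have "F -` {u} \<inter> set_pmf P = (F -` {u} \<inter> S) \<inter> set_pmf P" using assms by auto
  also have "measure_pmf.prob P \<dots> = measure_pmf.prob P (F -` {u} \<inter> S)" by (simp add: measure_Int_set_pmf)
  also have "\<dots> = sum (pmf P) (F -` {u} \<inter> S)" using assms by (simp add: measure_measure_pmf_finite)
  also have "F -` {u} \<inter> S = {w\<in>S. F w = u}" by auto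
  finally show ?thesis .
qed

lemma ent_sum_U: assumes "finite U" "F ` set_pmf P \<subseteq> U"
  shows "ent P F = - (\<Sum>u\<in>U. pmf (map_pmf F P) u * log 2 (pmf (map_pmf F P) u))"
  unfolding ent_def
proof (rule arg_cong[where f = uminus], rule sum.mono_neutral_left)
  show "\<forall>i\<in>U - set_pmf (map_pmf F P). pmf (map_pmf F P) i * log 2 (pmf (map_pmf F P) i) = 0"
    by (auto simp: set_pmf_eq)
qed (use assms in auto)

lemma l1_map: assumes S: "finite (set_pmf P \<union> set_pmf Q)" and U: "finite U" "F ` (set_pmf P \<union> set_pmf Q) \<subseteq> U"
  shows "(\<Sum>u\<in>U. \<bar>pmf (map_pmf F P) u - pmf (map_pmf F Q) u\<bar>) \<le> l1dist P Q"
proof -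
  let ?S = "set_pmf P \<union> set_pmf Q"
  have "(\<Sum>u\<in>U. \<bar>pmf (map_pmf F P) u - pmf (map_pmf F Q) u\<bar>) =
        (\<Sum>u\<in>U. \<bar>\<Sum>w\<in>{w\<in>?S. F w = u}. pmf P w - pmf Q w\<bar>)"
    by (simp add: pmf_map_sum[OF S, of P] pmf_map_sum[OF S, of Q] sum_subtractf)
  also have "\<dots> \<le> (\<Sum>u\<in>U. \<Sum>w\<in>{w\<in>?S. F w = u}. \<bar>pmf P w - pmf Q w\<bar>)"
    by (intro sum_mono sum_abs)
  also have "\<dots> = (\<Sum>w\<in>?S. \<bar>pmf P w - pmf Q w\<bar>)"
    by (rule sum.group) (use S U in auto)
  finally show ?thesis by (simp add: l1dist_def)
qed

lemma ent_cont: assumes fP: "finite (set_pmf P)" and fQ: "finite (set_pmf Q)"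
  and U: "finite U" "F ` (set_pmf P \<union> set_pmf Q) \<subseteq> U" and K: "real (card U) \<le> K" "1 \<le> K"
  and e: "l1dist P Q \<le> \<epsilon>" "0 < \<epsilon>" "\<epsilon> \<le> 1/4"
  shows "\<bar>ent P F - ent Q F\<bar> \<le> 2 * \<epsilon> * log 2 (K / \<epsilon>) + 2 * \<epsilon>"
proof -
  define p where "p = pmf (map_pmf F P)"
  define q where "q = pmf (map_pmf F Q)"
  define d where "d u = \<bar>p u - q u\<bar>" for u
  have eP: "ent P F = - (\<Sum>u\<in>U. p u * ln (p u)) / ln 2"
    using ent_sum_U[OF U(1), of F P] U(2) by (auto simp: p_def log_def sum_divide_distrib)
  have eQ: "ent Q F = - (\<Sum>u\<in>U. q u * ln (q u)) / ln 2"
    using ent_sum_U[OF U(1), of F Q] U(2) by (auto simp: q_def log_def sum_divide_distrib)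
  have "\<bar>ent P F - ent Q F\<bar> = \<bar>\<Sum>u\<in>U. p u * ln (p u) - q u * ln (q u)\<bar> / ln 2"
    unfolding eP eQ by (simp add: sum_subtractf abs_minus_commute diff_divide_distrib[symmetric])
  also have "\<dots> \<le> (\<Sum>u\<in>U. \<bar>p u * ln (p u) - q u * ln (q u)\<bar>) / ln 2"
    by (intro divide_right_mono sum_abs) auto
  also have "\<dots> \<le> (\<Sum>u\<in>U. - (d u * ln (d u)) + d u) / ln 2"
  proof (intro divide_right_mono sum_mono)
    fix u assume "u \<in> U"
    show "\<bar>p u * ln (p u) - q u * ln (q u)\<bar> \<le> - (d u * ln (d u)) + d u"
      unfolding d_def by (rule phi_diff) (auto simp: p_def q_def pmf_le_1)
  qed auto
  also have "\<dots> = ((\<Sum>u\<in>U. - (d u * ln (d u))) + sum d U) / ln 2"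
    by (simp only: sum.distrib)
  also have "\<dots> \<le> (2 * \<epsilon> * ln (K / \<epsilon>) + \<epsilon>) / ln 2"
  proof -
    have "sum d U \<le> l1dist P Q" unfolding d_def p_def q_def by (rule l1_map) (use fP fQ U in auto)
    then have sd: "sum d U \<le> \<epsilon>" using e by linarith
    have "(\<Sum>u\<in>U. - (d u * ln (d u))) \<le> 2 * \<epsilon> * ln (K / \<epsilon>)"
      by (rule psi_sum[OF U(1) K]) (use sd e in \<open>simp_all add: d_def\<close>)
    then show ?thesis using sd by (intro divide_right_mono) auto
  qed
  also have "\<dots> = 2 * \<epsilon> * log 2 (K / \<epsilon>) + \<epsilon> / ln 2"
    by (simp add: log_def add_divide_distrib)
  also have "\<dots> \<le> 2 * \<epsilon> * log 2 (K / \<epsilon>) + 2 * \<epsilon>"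
  proof -
    have "ln 2 \<ge> (1/2::real)" using ln2_ge_two_thirds by simp
    then have "\<epsilon> / ln 2 \<le> 2 * \<epsilon>" using e by (simp add: field_simps)
    then show ?thesis by simp
  qed
  finally show ?thesis by simp
qed

lemma binent_n: fixes a c :: real assumes a: "0 \<le> a" and c: "0 \<le> c" and s: "0 < a + c"
  shows "a * ln (2 * a / (a + c)) + c * ln (2 * c / (a + c)) \<le> (a - c)^2 / (a + c)"
proof -
  have t: "x * ln (2 * x / (a + c)) \<le> x * (2 * x / (a + c) - 1)" if "0 \<le> x" for x
  proof (cases "x = 0")
    case False
    then have "ln (2 * x / (a + c)) \<le> 2 * x / (a + c) - 1" using that s by (intro ln_le_minus_one) auto
    then show ?thesis using that by (intro mult_left_mono) auto
  qed simp
  have n: "(a - c)^2 = 2*a*a + 2*c*c - (a + c) * (a + c)" by (simp add: power2_eq_square algebra_simps)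
  have "a * (2 * a / (a + c) - 1) + c * (2 * c / (a + c) - 1) = (2*a*a + 2*c*c - (a + c) * (a + c)) / (a + c)"
    using s by (simp add: diff_divide_distrib right_diff_distrib add_divide_distrib mult.assoc mult.left_commute)
  then have "a * (2 * a / (a + c) - 1) + c * (2 * c / (a + c) - 1) = (a - c)^2 / (a + c)" using n by simp
  then show ?thesis using t[OF a] t[OF c] by linarith
qed

lemma sq_bound: fixes a c :: real assumes a: "0 \<le> a" and c: "0 \<le> c" and s: "0 < a + c"
  shows "(a - c)^2 / (a + c) \<le> 2 * ((a + c) - 2 * sqrt (a * c))" and "2 * sqrt (a * c) \<le> a + c"
proof -
  define r where "r = sqrt (a * c)"
  have r0: "r \<ge> 0" and rr: "r * r = a * c" using a c by (auto simp: r_def)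
  have sq: "(a + c)^2 - (2 * r)^2 = (a - c)^2"
  proof -
    have "(a + c)^2 - (2 * r)^2 = (a + c)^2 - 4 * (r * r)" by (simp add: power2_eq_square)
    also have "\<dots> = (a - c)^2" unfolding rr by (simp add: power2_eq_square algebra_simps)
    finally show ?thesis .
  qed
  have "(2 * r)^2 \<le> (a + c)^2" using sq zero_le_power2[of "a - c"] by linarith
  then have le: "2 * r \<le> a + c" by (rule power2_le_imp_le) (use s in auto)
  then show "2 * sqrt (a * c) \<le> a + c" by (simp add: r_def)
  have "(a - c)^2 = (a + c - 2 * r) * (a + c + 2 * r)" 
  proof -
    have "(a + c - 2 * r) * (a + c + 2 * r) = (a + c)^2 - (2 * r)^2" by (simp add: power2_eq_square; algebra)
    then show ?thesis using sq by simp
  qed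
  also have "\<dots> \<le> (a + c - 2 * r) * (2 * (a + c))"
    by (rule mult_left_mono) (use le r0 in auto)
  also have "\<dots> = (2 * ((a + c) - 2 * r)) * (a + c)" by (simp add: algebra_simps)
  finally have "(a - c)^2 \<le> (2 * ((a + c) - 2 * r)) * (a + c)" .
  then show "(a - c)^2 / (a + c) \<le> 2 * ((a + c) - 2 * sqrt (a * c))"
    using s unfolding r_def by (simp add: pos_divide_le_eq)
qed

lemma binent: fixes a c :: real assumes a: "0 \<le> a" and c: "0 \<le> c" and s: "0 < a + c"
  shows "- (a * log 2 a) - c * log 2 c + (a + c) * log 2 (a + c) \<ge> (a + c) - 3 * ((a + c) - 2 * sqrt (a * c))"
proof -
  have e: "x * ln (2 * x / (a + c)) = x * ln 2 + x * ln x - x * ln (a + c)" if "0 \<le> x" for x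
  proof (cases "x = 0")
    case False then show ?thesis using that s by (simp add: ln_div ln_mult algebra_simps)
  qed simp
  have X: "- (a * ln a) - c * ln c + (a + c) * ln (a + c) \<ge> (a + c) * ln 2 - 2 * ((a + c) - 2 * sqrt (a * c))"
    using binent_n[OF a c s] sq_bound[OF a c s] e[OF a] e[OF c] by (simp add: algebra_simps)
  have l2: "ln 2 \<ge> (2/3::real)" by (rule ln2_ge_two_thirds)
  have l0: "ln 2 > (0::real)" by simp
  define D where "D = (a + c) - 2 * sqrt (a * c)"
  define L where "L = - (a * ln a) - c * ln c + (a + c) * ln (a + c)"
  have nn: "0 \<le> D" using sq_bound(2)[OF a c s] by (simp add: D_def)
  have X': "(a + c) * ln 2 - 2 * D \<le> L" using X by (simp add: D_def L_def)
  have "((a + c) * ln 2 - 2 * D) / ln 2 \<le> L / ln 2" by (rule divide_right_mono[OF X']) simp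
  moreover have "((a + c) * ln 2 - 2 * D) / ln 2 = (a + c) - 2 / ln 2 * D" using l0 by (simp add: diff_divide_distrib)
  moreover have "2 / ln 2 \<le> (3::real)" using l2 l0 by (simp add: divide_le_eq)
  then have "2 / ln 2 * D \<le> 3 * D" by (rule mult_right_mono) (use nn in auto)
  moreover have "L / ln 2 = - (a * log 2 a) - c * log 2 c + (a + c) * log 2 (a + c)"
    by (simp add: L_def log_def diff_divide_distrib add_divide_distrib)
  ultimately show ?thesis unfolding D_def by linarith
qed


lemma bhatt_ent: assumes f: "finite (set_pmf P)"
  shows "ent P (\<lambda>w. (B w, Y w)) - ent P Y \<ge> 1 - 3 * (1 - bhatt P B Y)"
proof -
  define r where "r = pmf (map_pmf (\<lambda>w. (B w, Y w)) P)"
  define py where "py = pmf (map_pmf Y P)"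
  define Ys where "Ys = set_pmf (map_pmf Y P)"
  have fY: "finite Ys" using f by (simp add: Ys_def)
  have marg: "py y = r (False, y) + r (True, y)" for y
  proof -
    let ?S = "set_pmf P"
    have "py y = (\<Sum>w\<in>{w\<in>?S. Y w = y}. pmf P w)" unfolding py_def by (rule pmf_map_sum) (use f in auto)
    also have "{w\<in>?S. Y w = y} = {w\<in>?S. (B w, Y w) = (False, y)} \<union> {w\<in>?S. (B w, Y w) = (True, y)}" by auto
    also have "(\<Sum>w\<in>\<dots>. pmf P w) = (\<Sum>w\<in>{w\<in>?S. (B w, Y w) = (False, y)}. pmf P w) + (\<Sum>w\<in>{w\<in>?S. (B w, Y w) = (True, y)}. pmf P w)"
      by (rule sum.union_disjoint) (use f in auto)
    also have "\<dots> = r (False, y) + r (True, y)"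
      unfolding r_def by (simp add: pmf_map_sum[OF f, of P])
    finally show ?thesis .
  qed
  have e1: "ent P (\<lambda>w. (B w, Y w)) = - (\<Sum>y\<in>Ys. r (False, y) * log 2 (r (False, y)) + r (True, y) * log 2 (r (True, y)))"
  proof -
    have "ent P (\<lambda>w. (B w, Y w)) = - (\<Sum>u\<in>UNIV \<times> Ys. r u * log 2 (r u))"
      unfolding r_def by (rule ent_sum_U) (use fY in \<open>auto simp: Ys_def\<close>)
    also have "(\<Sum>u\<in>UNIV \<times> Ys. r u * log 2 (r u)) = (\<Sum>b\<in>UNIV. \<Sum>y\<in>Ys. r (b, y) * log 2 (r (b, y)))"
      by (simp add: sum.cartesian_product)
    also have "\<dots> = (\<Sum>y\<in>Ys. r (False, y) * log 2 (r (False, y))) + (\<Sum>y\<in>Ys. r (True, y) * log 2 (r (True, y)))"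
      by (simp add: UNIV_bool)
    finally show ?thesis by (simp add: sum.distrib)
  qed
  have e2: "ent P Y = - (\<Sum>y\<in>Ys. py y * log 2 (py y))" unfolding ent_def py_def Ys_def by simp
  have pos: "py y > 0" if "y \<in> Ys" for y using that by (simp add: py_def Ys_def pmf_positive)
  have bh: "bhatt P B Y = (\<Sum>y\<in>Ys. 2 * sqrt (r (False, y) * r (True, y)))"
  proof -
    have "bhatt P B Y = 2 * (\<Sum>y\<in>Ys. py y * sqrt (r (False, y) / py y * (r (True, y) / py y)))"
      unfolding bhatt_def r_def py_def Ys_def by simp
    also have "\<dots> = (\<Sum>y\<in>Ys. 2 * sqrt (r (False, y) * r (True, y)))"
      unfolding sum_distrib_left
    proof (intro sum.cong refl)
      fix y assume y: "y \<in> Ys"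
      have "r (False, y) / py y * (r (True, y) / py y) = (r (False, y) * r (True, y)) / (py y)^2"
        by (simp add: power2_eq_square)
      then have "sqrt (r (False, y) / py y * (r (True, y) / py y)) = sqrt (r (False, y) * r (True, y)) / py y"
        using pos[OF y] by (simp add: real_sqrt_divide)
      then show "2 * (py y * sqrt (r (False, y) / py y * (r (True, y) / py y))) = 2 * sqrt (r (False, y) * r (True, y))"
        using pos[OF y] by simp
    qed
    finally show ?thesis .
  qed
  have one: "(\<Sum>y\<in>Ys. py y) = 1" unfolding py_def Ys_def by (rule sum_pmf_eq_1) (use fY in \<open>auto simp: Ys_def\<close>)
  have "ent P (\<lambda>w. (B w, Y w)) - ent P Y = (\<Sum>y\<in>Ys. - (r (False, y) * log 2 (r (False, y))) - r (True, y) * log 2 (r (True, y))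
      + (r (False, y) + r (True, y)) * log 2 (r (False, y) + r (True, y)))"
    unfolding e1 e2 marg by (simp add: sum.distrib sum_subtractf sum_negf)
  also have "\<dots> \<ge> (\<Sum>y\<in>Ys. (r (False, y) + r (True, y)) - 3 * ((r (False, y) + r (True, y)) - 2 * sqrt (r (False, y) * r (True, y))))"
  proof (rule sum_mono)
    fix y assume y: "y \<in> Ys"
    show "(r (False, y) + r (True, y)) - 3 * ((r (False, y) + r (True, y)) - 2 * sqrt (r (False, y) * r (True, y)))
      \<le> - (r (False, y) * log 2 (r (False, y))) - r (True, y) * log 2 (r (True, y))
      + (r (False, y) + r (True, y)) * log 2 (r (False, y) + r (True, y))"
      by (rule binent) (use pos[OF y] marg[of y] in \<open>auto simp: r_def\<close>)
  qed
  also have "(\<Sum>y\<in>Ys. (r (False, y) + r (True, y)) - 3 * ((r (False, y) + r (True, y)) - 2 * sqrt (r (False, y) * r (True, y))))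
      = (\<Sum>y\<in>Ys. py y) - 3 * ((\<Sum>y\<in>Ys. py y) - (\<Sum>y\<in>Ys. 2 * sqrt (r (False, y) * r (True, y))))"
  proof -
    have g: "(\<Sum>y\<in>Ys. s y - 3 * (s y - t y)) = (\<Sum>y\<in>Ys. s y) - 3 * ((\<Sum>y\<in>Ys. s y) - (\<Sum>y\<in>Ys. t y))"
      for s t :: "_ \<Rightarrow> real" by (simp only: sum_subtractf[symmetric] sum_distrib_left)
    show ?thesis using g[of "\<lambda>y. r (False, y) + r (True, y)" "\<lambda>y. 2 * sqrt (r (False, y) * r (True, y))"]
      by (simp add: marg)
  qed
  also have "\<dots> = 1 - 3 * (1 - bhatt P B Y)" by (simp add: one bh)
  finally show ?thesis .
qed


lemma ent_const_pair: "finite (set_pmf P) \<Longrightarrow> ent P (\<lambda>w. (c, F w)) = ent P F"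
  using ent_inj[of P "Pair c" F] by (simp add: inj_on_def)

lemma ent_funpair: assumes f: "finite (set_pmf P)" and g: "\<And>w. w \<in> set_pmf P \<Longrightarrow> G w = g (F w)"
  shows "ent P (\<lambda>w. (F w, G w)) = ent P F"
proof -
  have "ent P (\<lambda>w. (\<lambda>y. (y, g y)) (F w)) = ent P F" by (rule ent_inj[OF f]) (auto simp: inj_on_def)
  moreover have "ent P (\<lambda>w. (\<lambda>y. (y, g y)) (F w)) = ent P (\<lambda>w. (F w, G w))"
    by (rule ent_cong) (simp add: g)
  ultimately show ?thesis by simp
qed

lemma cond_mono: assumes f: "finite (set_pmf P)" and g: "\<And>w. w \<in> set_pmf P \<Longrightarrow> Ys w = g (Yf w)"
  shows "ent P (\<lambda>w. (A w, Yf w)) - ent P Yf \<le> ent P (\<lambda>w. (A w, Ys w)) - ent P Ys"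
proof -
  have s: "ent P (\<lambda>w. (A w, Yf w, Ys w)) + ent P Ys \<le> ent P (\<lambda>w. (A w, Ys w)) + ent P (\<lambda>w. (Yf w, Ys w))"
    by (rule ent_submod[OF f])
  have 1: "ent P (\<lambda>w. (Yf w, Ys w)) = ent P Yf" by (rule ent_funpair[OF f, where g = g]) (rule g)
  have 2: "ent P (\<lambda>w. ((A w, Yf w), Ys w)) = ent P (\<lambda>w. (A w, Yf w))"
    by (rule ent_funpair[OF f, where g = "\<lambda>(a, y). g y"]) (simp add: g)
  have 3: "ent P (\<lambda>w. (A w, Yf w, Ys w)) = ent P (\<lambda>w. ((A w, Yf w), Ys w))"
  proof -
    have "ent P (\<lambda>w. (\<lambda>((a, y), z). (a, y, z)) ((A w, Yf w), Ys w)) = ent P (\<lambda>w. ((A w, Yf w), Ys w))"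
      by (rule ent_inj[OF f]) (auto simp: inj_on_def)
    then show ?thesis by simp
  qed
  show ?thesis using s 1 2 3 by simp
qed

lemma Tsub_ext: "Tsub n S w \<in> extensional S"
  by (simp add: Tsub_def)

lemma chainH:
  fixes P :: "(bool list \<times> 'x list \<times> 'z list) pmf"
  assumes f: "finite (set_pmf P)" and S: "S \<subseteq> {1..2^n}"
    and H: "\<And>i. i \<in> S \<Longrightarrow> bhatt P (\<lambda>w. Tvec n w ! (i - 1)) (\<lambda>w. (take (i - 1) (Tvec n w), snd (snd w))) \<ge> 1 - \<delta>"
  shows "ent P (\<lambda>w. (Tsub n S w, snd (snd w))) \<ge> ent P (\<lambda>w. snd (snd w)) + real (card S) * (1 - 3 * \<delta>)"
proof -
  have fS: "finite S" using S finite_subset by blast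
  from fS S H show ?thesis
  proof (induction S rule: finite_linorder_max_induct)
    case empty
    have e: "(\<lambda>w. (Tsub n {} w, snd (snd w))) = (\<lambda>w. (\<lambda>_. undefined, snd (snd w)))" by (auto simp: Tsub_def restrict_def fun_eq_iff)
    show ?case unfolding e using ent_const_pair[OF f, of "(\<lambda>_. undefined) :: nat \<Rightarrow> bool" "\<lambda>w. snd (snd w)"] by simp
  next
    case (insert m A)
    have mA: "m \<notin> A" using insert.hyps(2) by auto
    have m1: "1 \<le> m" using insert.prems(1) by auto
    have A1: "\<And>i. i \<in> A \<Longrightarrow> 1 \<le> i \<and> i < m" using insert.prems(1) insert.hyps(2) by auto
    define Tm where "Tm w = Tvec n w ! (m - 1)" for w :: "bool list \<times> 'x list \<times> 'z list"
    define Yf where "Yf w = (take (m - 1) (Tvec n w), snd (snd w))" for w :: "bool list \<times> 'x list \<times> 'z list"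
    define Ys where "Ys w = (Tsub n A w, snd (snd w))" for w :: "bool list \<times> 'x list \<times> 'z list"
    have IH: "ent P Ys \<ge> ent P (\<lambda>w. snd (snd w)) + real (card A) * (1 - 3 * \<delta>)"
      unfolding Ys_def using insert.IH insert.prems by auto
    have A2: "\<And>i. i \<in> A \<Longrightarrow> i - Suc 0 < m - Suc 0" using A1 by fastforce
    have gY: "Ys w = (\<lambda>(t, z). (restrict (\<lambda>i. t ! (i - 1)) A, z)) (Yf w)" for w
      unfolding Ys_def Yf_def Tsub_def
      by (auto simp: restrict_def fun_eq_iff A2 intro!: nth_take[symmetric])
    have step1: "ent P (\<lambda>w. (Tm w, Yf w)) - ent P Yf \<le> ent P (\<lambda>w. (Tm w, Ys w)) - ent P Ys"
      by (rule cond_mono[OF f]) (rule gY)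
    have bh: "ent P (\<lambda>w. (Tm w, Yf w)) - ent P Yf \<ge> 1 - 3 * \<delta>"
    proof -
      have "ent P (\<lambda>w. (Tm w, Yf w)) - ent P Yf \<ge> 1 - 3 * (1 - bhatt P Tm Yf)" by (rule bhatt_ent[OF f])
      moreover have "bhatt P Tm Yf \<ge> 1 - \<delta>" unfolding Tm_def Yf_def by (rule insert.prems(2)) simp
      ultimately show ?thesis by (simp add: algebra_simps)
    qed
    have eq: "ent P (\<lambda>w. (Tsub n (insert m A) w, snd (snd w))) = ent P (\<lambda>w. (Tm w, Ys w))"
    proof -
      let ?F = "\<lambda>w. (Tsub n (insert m A) w, snd (snd w))"
      let ?phi = "\<lambda>(h :: nat \<Rightarrow> bool, z :: 'z list). (h m, (restrict h A, z))"
      have "ent P (\<lambda>w. ?phi (?F w)) = ent P ?F"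
      proof (rule ent_inj[OF f], rule inj_onI)
        fix u v assume u: "u \<in> ?F ` set_pmf P" and v: "v \<in> ?F ` set_pmf P" and e: "?phi u = ?phi v"
        obtain hu zu where U: "u = (hu, zu)" "hu \<in> extensional (insert m A)" using u Tsub_ext by fastforce
        obtain hv zv where V: "v = (hv, zv)" "hv \<in> extensional (insert m A)" using v Tsub_ext by fastforce
        have "hu = hv"
        proof
          fix i show "hu i = hv i"
          proof (cases "i = m")
            case True then show ?thesis using e U V by simp
          next
            case False
            show ?thesis
            proof (cases "i \<in> A")
              case True
              have "restrict hu A i = restrict hv A i" using e U V by simp
              then show ?thesis using True by simp
            next
              case False2: False
              then show ?thesis using False U V by (simp add: extensional_def)
            qed
          qed
        qed
        then show "u = v" using e U V by simp
      qed
      moreover have "ent P (\<lambda>w. ?phi (?F w)) = ent P (\<lambda>w. (Tm w, Ys w))"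
        by (rule ent_cong) (auto simp: Tm_def Ys_def Tsub_def restrict_def fun_eq_iff mA)
      ultimately show ?thesis by simp
    qed
    have "card (insert m A) = card A + 1" using mA insert.hyps(1) by simp
    then show ?case using eq step1 bh IH by (simp add: algebra_simps)
  qed
qed

lemma ent_Tsub_le: assumes f: "finite (set_pmf Q)" and S: "finite S"
  shows "ent Q (Tsub n S) \<le> real (card S)"
proof -
  have sub: "Tsub n S ` set_pmf Q \<subseteq> PiE S (\<lambda>_. UNIV :: bool set)"
    by (auto simp: Tsub_def)
  have fin: "finite (PiE S (\<lambda>_. UNIV :: bool set))" using S by (simp add: finite_PiE)
  have c: "card (Tsub n S ` set_pmf Q) \<le> 2 ^ card S"
  proof -
    have "card (Tsub n S ` set_pmf Q) \<le> card (PiE S (\<lambda>_. UNIV :: bool set))" by (rule card_mono[OF fin sub])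
    also have "\<dots> = 2 ^ card S" using S by (simp add: card_PiE)
    finally show ?thesis .
  qed
  have pos: "card (Tsub n S ` set_pmf Q) > 0" using f set_pmf_not_empty[of Q] by (simp add: card_gt_0_iff)
  have "ent Q (Tsub n S) \<le> log 2 (card (Tsub n S ` set_pmf Q))" by (rule ent_card[OF f])
  also have "\<dots> \<le> log 2 (2 ^ card S)"
    using c pos by (subst log_le_cancel_iff) (auto simp flip: of_nat_le_iff)
  also have "\<dots> = card S" by (simp add: log_nat_power)
  finally show ?thesis .
qed

lemma Qbound: assumes f: "finite (set_pmf Q)" and I: "finite I" and AI: "A \<subseteq> I"
  shows "mutinf Q (Tsub n (I - A)) (\<lambda>w. (Tsub n A w, snd (snd w)))
    \<le> real (card I) + ent Q (\<lambda>w. snd (snd w)) - ent Q (\<lambda>w. (Tsub n I w, snd (snd w)))"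
proof -
  have fA: "finite A" using I AI finite_subset by blast
  have m: "mutinf Q (Tsub n (I - A)) (\<lambda>w. (Tsub n A w, snd (snd w))) =
      ent Q (Tsub n (I - A)) + ent Q (\<lambda>w. (Tsub n A w, snd (snd w))) - ent Q (\<lambda>w. (Tsub n (I - A) w, Tsub n A w, snd (snd w)))"
    by (rule mutinf_ent[OF f])
  have 1: "ent Q (Tsub n (I - A)) \<le> real (card (I - A))" by (rule ent_Tsub_le[OF f]) (use I in simp)
  have 2: "ent Q (\<lambda>w. (Tsub n A w, snd (snd w))) \<le> real (card A) + ent Q (\<lambda>w. snd (snd w))"
    using ent_sub[OF f, of "Tsub n A" "\<lambda>w. snd (snd w)"] ent_Tsub_le[OF f fA, of n] by simp
  have 3: "ent Q (\<lambda>w. (Tsub n (I - A) w, Tsub n A w, snd (snd w))) = ent Q (\<lambda>w. (Tsub n I w, snd (snd w)))"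
  proof -
    let ?F = "\<lambda>w. (Tsub n I w, snd (snd w))"
    let ?phi = "\<lambda>(h :: nat \<Rightarrow> bool, z :: 'c list). (restrict h (I - A), (restrict h A, z))"
    have "ent Q (\<lambda>w. ?phi (?F w)) = ent Q ?F"
    proof (rule ent_inj[OF f], rule inj_onI)
      fix u v assume u: "u \<in> ?F ` set_pmf Q" and v: "v \<in> ?F ` set_pmf Q" and e: "?phi u = ?phi v"
      obtain hu zu where U: "u = (hu, zu)" "hu \<in> extensional I" using u Tsub_ext by fastforce
      obtain hv zv where V: "v = (hv, zv)" "hv \<in> extensional I" using v Tsub_ext by fastforce
      have "hu = hv"
      proof
        fix i show "hu i = hv i"
        proof (cases "i \<in> A")
          case True
          have "restrict hu A i = restrict hv A i" using e U V by simp
          then show ?thesis using True by simp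
        next
          case False
          show ?thesis
          proof (cases "i \<in> I")
            case True
            have "restrict hu (I - A) i = restrict hv (I - A) i" using e U V by simp
            then show ?thesis using True False by simp
          next
            case False2: False
            then show ?thesis using U V by (simp add: extensional_def)
          qed
        qed
      qed
      then show "u = v" using e U V by simp
    qed
    moreover have "ent Q (\<lambda>w. ?phi (?F w)) = ent Q (\<lambda>w. (Tsub n (I - A) w, Tsub n A w, snd (snd w)))"
      by (rule ent_cong) (use AI in \<open>auto simp: Tsub_def restrict_def fun_eq_iff\<close>)
    ultimately show ?thesis by simp
  qed
  have c: "card (I - A) + card A = card I" using I AI fA by (simp add: card_Diff_subset card_mono)
  have "real (card (I - A)) + real (card A) = real (card I)" using c by (metis of_nat_add)
  then show ?thesis unfolding m 3 using 1 2 by linarith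
qed


lemma exp_sq: fixes y :: real assumes "0 \<le> y" shows "y^2 / 4 \<le> exp y"
proof -
  have "exp y = exp (y/2) * exp (y/2)" by (simp flip: exp_add)
  moreover have "y / 2 \<le> exp (y/2)" using exp_ge_add_one_self[of "y/2"] by linarith
  moreover have "0 \<le> y / 2" using assms by simp
  ultimately have "(y/2) * (y/2) \<le> exp y" by (metis mult_mono exp_ge_zero order.trans)
  then show ?thesis by (simp add: power2_eq_square)
qed

lemma n0_exists: fixes \<beta> :: real assumes b: "0 < \<beta>"
  shows "\<exists>n0::nat. \<forall>n\<ge>n0. real (2^n) * 2 powr (- (real (2^n) powr \<beta>)) \<le> 1/4"
proof (intro exI allI impI)
  fix n :: nat assume n: "n \<ge> nat \<lceil>27 / \<beta>^2\<rceil> + 1"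
  have n1: "real n \<ge> 1" using n by simp
  have nb: "real n \<ge> 27 / \<beta>^2" using n by linarith
  have "real n * \<beta>^2 \<ge> 27" using nb b by (simp add: field_simps)
  define y where "y = real n * \<beta> * ln 2"
  have y0: "0 \<le> y" using b by (simp add: y_def)
  have ly: "y \<ge> real n * \<beta> * (2/3)" unfolding y_def using ln2_ge_two_thirds b
    by (intro mult_left_mono) auto
  have "2 powr (real n * \<beta>) = exp y" by (simp add: powr_def y_def mult_ac)
  also have "exp y \<ge> y^2 / 4" by (rule exp_sq[OF y0])
  finally have e1: "2 powr (real n * \<beta>) \<ge> y^2 / 4" .
  have "y^2 \<ge> (real n * \<beta> * (2/3))^2" using ly b by (intro power_mono) auto
  moreover have "(real n * \<beta> * (2/3))^2 = (real n * \<beta>)^2 * 4 / 9" by (simp add: power2_eq_square)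
  ultimately have "y^2 / 4 \<ge> (real n * \<beta>)^2 / 9" by simp
  moreover have "(real n * \<beta>)^2 / 9 = real n * (real n * \<beta>^2) / 9" by (simp add: power2_eq_square)
  moreover have "real n * (real n * \<beta>^2) / 9 \<ge> real n * 27 / 9"
    using \<open>real n * \<beta>^2 \<ge> 27\<close> by (intro divide_right_mono mult_left_mono) auto
  ultimately have "2 powr (real n * \<beta>) \<ge> real n + 2" using e1 n1 by linarith
  moreover have "real (2^n) powr \<beta> = 2 powr (real n * \<beta>)"
    by (simp add: powr_realpow[symmetric] powr_powr)
  ultimately have k: "real n - real (2^n) powr \<beta> \<le> -2" by linarith
  have "real (2^n) * 2 powr (- (real (2^n) powr \<beta>)) = 2 powr (real n - real (2^n) powr \<beta>)"
    by (simp add: powr_realpow[symmetric] powr_add[symmetric])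
  also have "\<dots> \<le> 2 powr (-2)" using k by simp
  also have "\<dots> = 1/4" by (simp add: powr_minus powr_realpow[symmetric] del: powr_realpow)
  finally show "real (2^n) * 2 powr (- (real (2^n) powr \<beta>)) \<le> 1/4" .
qed

lemma iid_space: assumes p: "set_pmf p \<subseteq> UNIV \<times> Xs \<times> UNIV"
  shows "set_pmf (iid N p) \<subseteq> space N Xs"
proof
  fix w assume "w \<in> set_pmf (iid N p)"
  then obtain ws where ws: "ws \<in> set_pmf (replicate_pmf N p)"
    and w: "w = (map fst ws, map (fst \<circ> snd) ws, map (snd \<circ> snd) ws)"
    by (auto simp: iid_def)
  have "length ws = N" "set ws \<subseteq> set_pmf p" using ws by (auto simp: set_replicate_pmf)
  then show "w \<in> space N Xs" using w p by (auto simp: space_def)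
qed

lemma space_sub: "space N Xs \<subseteq> {v. set v \<subseteq> UNIV \<and> length v = N} \<times> {x. set x \<subseteq> Xs \<and> length x = N} \<times> {z. set z \<subseteq> UNIV \<and> length z = N}"
  by (auto simp: space_def)

lemma finite_space: assumes "finite Xs" shows "finite (space N (Xs :: 'x set) :: (bool list \<times> 'x list \<times> 'z::finite list) set)"
  by (rule finite_subset[OF space_sub]) (intro finite_cartesian_product finite_lists_length_eq; simp add: assms)

lemma cardZ: "card {z :: 'z::finite list. set z \<subseteq> UNIV \<and> length z = N} = CARD('z) ^ N"
  by (rule card_lists_length_eq) simp

lemma cardW: "card ((\<lambda>(v, z). (restrict (\<lambda>i. polar n v ! (i - 1)) I, z)) `
     ({v. set v \<subseteq> UNIV \<and> length v = N} \<times> {z :: 'z::finite list. set z \<subseteq> UNIV \<and> length z = N}))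
   \<le> 2 ^ N * CARD('z) ^ N"
proof -
  have "card ((\<lambda>(v, z). (restrict (\<lambda>i. polar n v ! (i - 1)) I, z)) `
     ({v. set v \<subseteq> UNIV \<and> length v = N} \<times> {z :: 'z::finite list. set z \<subseteq> UNIV \<and> length z = N}))
    \<le> card ({v. set v \<subseteq> (UNIV :: bool set) \<and> length v = N} \<times> {z :: 'z::finite list. set z \<subseteq> UNIV \<and> length z = N})"
    by (rule card_image_le) (intro finite_cartesian_product finite_lists_length_eq; simp)
  also have "\<dots> = 2 ^ N * CARD('z) ^ N"
  proof -
    have "card {v::bool list. length v = N} = 2^N" using card_lists_length_eq[of "UNIV::bool set" N] by simp
    moreover have "card {v::'z list. length v = N} = CARD('z)^N" using card_lists_length_eq[of "UNIV::'z set" N] by simp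
    ultimately show ?thesis by (simp add: card_cartesian_product)
  qed
  finally show ?thesis .
qed

lemma core:
  fixes p :: "(bool \<times> 'x \<times> 'z::finite) pmf" and Q :: "(bool list \<times> 'x list \<times> 'z list) pmf"
  assumes Xs: "finite Xs" and p: "set_pmf p \<subseteq> UNIV \<times> Xs \<times> UNIV"
    and Qs: "set_pmf Q \<subseteq> space (2^n) Xs"
    and l1: "l1dist (iid (2^n) p) Q \<le> \<epsilon>" and e: "0 < \<epsilon>" "\<epsilon> \<le> 1/4" and d: "0 \<le> \<delta>"
    and I: "I \<subseteq> Hset n \<delta> (iid (2^n) p)" and AI: "A \<subseteq> I"
  shows "mutinf Q (Tsub n (I - A)) (\<lambda>w. (Tsub n A w, snd (snd w)))
     \<le> 3 * \<delta> * real (2^n) + 2 * (2 * \<epsilon> * log 2 (real (2 ^ (2^n) * CARD('z) ^ (2^n)) / \<epsilon>) + 2 * \<epsilon>)"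
proof -
  define N :: nat where "N = 2^n"
  define P where "P = iid N p"
  define K :: real where "K = real (2 ^ N * CARD('z) ^ N)"
  define c where "c = 2 * \<epsilon> * log 2 (K / \<epsilon>) + 2 * \<epsilon>"
  have PS: "set_pmf P \<subseteq> space N Xs" unfolding P_def by (rule iid_space[OF p])
  have fS: "finite (space N Xs :: (bool list \<times> 'x list \<times> 'z list) set)" by (rule finite_space[OF Xs])
  have fP: "finite (set_pmf P)" using PS fS finite_subset by blast
  have fQ: "finite (set_pmf Q)" using Qs fS finite_subset unfolding N_def by blast
  have K1: "1 \<le> K"
  proof -
    have "1 \<le> 2 ^ N * CARD('z) ^ N" by (simp add: Suc_le_eq)
    then have "real 1 \<le> real (2 ^ N * CARD('z) ^ N)" by (simp only: of_nat_le_iff)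
    then show ?thesis unfolding K_def by simp
  qed
  have I1: "I \<subseteq> {1..N}" using I unfolding Hset_def N_def by blast
  have Ib: "\<And>i. i \<in> I \<Longrightarrow> bhatt P (\<lambda>w. Tvec n w ! (i - 1)) (\<lambda>w. (take (i - 1) (Tvec n w), snd (snd w))) \<ge> 1 - \<delta>"
    using I unfolding Hset_def P_def N_def by blast
  have fI: "finite I" using I1 finite_subset by blast
  have cI: "card I \<le> N" using card_mono[OF _ I1] by simp
  have union: "set_pmf P \<union> set_pmf Q \<subseteq> space N Xs" using PS Qs by (auto simp: N_def)
  define UZ where "UZ = {z :: 'z list. set z \<subseteq> UNIV \<and> length z = N}"
  have cZ: "\<bar>ent P (\<lambda>w. snd (snd w)) - ent Q (\<lambda>w. snd (snd w))\<bar> \<le> c"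
    unfolding c_def
  proof (rule ent_cont[OF fP fQ, of UZ])
    show "finite UZ" unfolding UZ_def by (rule finite_lists_length_eq) simp
    show "(\<lambda>w. snd (snd w)) ` (set_pmf P \<union> set_pmf Q) \<subseteq> UZ"
      using union by (auto simp: UZ_def space_def)
    have "card UZ = CARD('z) ^ N" unfolding UZ_def by (rule cardZ)
    also have "\<dots> \<le> 2 ^ N * CARD('z) ^ N" by simp
    finally show "real (card UZ) \<le> K" unfolding K_def by (simp only: of_nat_le_iff)
  qed (use K1 l1 e in \<open>simp_all only: P_def N_def\<close>)
  define UW where "UW = (\<lambda>(v, z). (restrict (\<lambda>i. polar n v ! (i - 1)) I, z)) `
     ({v. set v \<subseteq> UNIV \<and> length v = N} \<times> {z :: 'z list. set z \<subseteq> UNIV \<and> length z = N})"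
  have cW: "\<bar>ent P (\<lambda>w. (Tsub n I w, snd (snd w))) - ent Q (\<lambda>w. (Tsub n I w, snd (snd w)))\<bar> \<le> c"
    unfolding c_def
  proof (rule ent_cont[OF fP fQ, of UW])
    show "finite UW" unfolding UW_def
      by (intro finite_imageI finite_cartesian_product finite_lists_length_eq) simp_all
    show "(\<lambda>w. (Tsub n I w, snd (snd w))) ` (set_pmf P \<union> set_pmf Q) \<subseteq> UW"
    proof
      fix u assume "u \<in> (\<lambda>w. (Tsub n I w, snd (snd w))) ` (set_pmf P \<union> set_pmf Q)"
      then obtain w where w: "w \<in> space N Xs" and u: "u = (Tsub n I w, snd (snd w))" using union by blast
      obtain v x z where wv: "w = (v, x, z)" by (cases w) auto
      have "length v = N" "length z = N" using w wv by (auto simp: space_def)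
      then show "u \<in> UW" unfolding UW_def u wv
        by (intro image_eqI[where x = "(v, z)"]) (auto simp: Tsub_def Tvec_def)
    qed
    show "real (card UW) \<le> K" unfolding UW_def K_def using cardW[of n I N]
      by (simp only: of_nat_le_iff)
  qed (use K1 l1 e in \<open>simp_all only: P_def N_def\<close>)
  have ch: "ent P (\<lambda>w. (Tsub n I w, snd (snd w))) \<ge> ent P (\<lambda>w. snd (snd w)) + real (card I) * (1 - 3 * \<delta>)"
    by (rule chainH[OF fP _ Ib]) (use I1 in \<open>simp add: N_def\<close>)
  have qb: "mutinf Q (Tsub n (I - A)) (\<lambda>w. (Tsub n A w, snd (snd w)))
    \<le> real (card I) + ent Q (\<lambda>w. snd (snd w)) - ent Q (\<lambda>w. (Tsub n I w, snd (snd w)))"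
    by (rule Qbound[OF fQ fI AI])
  have m3': "real (card I) * (3 * \<delta>) \<le> real N * (3 * \<delta>)" by (rule mult_right_mono) (use cI d in auto)
  have m3: "real (card I) * (3 * \<delta>) \<le> 3 * \<delta> * real N" using m3' by (simp add: mult.commute)
  have z: "ent Q (\<lambda>w. snd (snd w)) \<le> ent P (\<lambda>w. snd (snd w)) + c" using cZ unfolding abs_le_iff by linarith
  have w: "ent P (\<lambda>w. (Tsub n I w, snd (snd w))) - c \<le> ent Q (\<lambda>w. (Tsub n I w, snd (snd w)))"
    using cW unfolding abs_le_iff by linarith
  have r: "real (card I) * (1 - 3 * \<delta>) = real (card I) - real (card I) * (3 * \<delta>)" by (simp add: right_diff_distrib)
  have "mutinf Q (Tsub n (I - A)) (\<lambda>w. (Tsub n A w, snd (snd w))) \<le> 3 * \<delta> * real N + 2 * c"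
    using qb ch z w r m3 by linarith
  then show ?thesis by (simp only: c_def K_def N_def)
qed

lemma arith_final: fixes X d L lg :: real
  assumes X: "1 \<le> X" and d: "0 \<le> d" and L: "0 \<le> L" and lg: "lg \<le> X * L + X"
  shows "3 * d * X + 2 * (2 * (X * d) * lg + 2 * (X * d)) \<le> (11 + 4 * L) * X ^ 3 * d"
proof -
  have Xd: "0 \<le> X * d" using X d by simp
  have "(X * d) * lg \<le> (X * d) * (X * L + X)" by (rule mult_left_mono[OF lg Xd])
  then have 1: "3 * d * X + 2 * (2 * (X * d) * lg + 2 * (X * d)) \<le> 7 * (X * d) + 4 * (L + 1) * (X * X * d)"
    by (simp add: algebra_simps)
  have X3: "X \<le> X ^ 3" and X2: "X * X \<le> X ^ 3"
  proof -
    have XX: "1 * 1 \<le> X * X" by (rule mult_mono) (use X in auto)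
    have "X * 1 \<le> X * (X * X)" by (rule mult_left_mono) (use X XX in auto)
    then show "X \<le> X ^ 3" by (simp add: power3_eq_cube)
    have "(X * X) * 1 \<le> (X * X) * X" by (rule mult_left_mono) (use X in auto)
    then show "X * X \<le> X ^ 3" by (simp add: power3_eq_cube)
  qed
  have "7 * (X * d) \<le> 7 * (X ^ 3 * d)" using X3 d by (simp add: mult_right_mono)
  moreover have "4 * (L + 1) * (X * X * d) \<le> 4 * (L + 1) * (X ^ 3 * d)"
    using X2 d L by (simp add: mult_right_mono mult_left_mono)
  ultimately have "7 * (X * d) + 4 * (L + 1) * (X * X * d) \<le> 7 * (X ^ 3 * d) + 4 * (L + 1) * (X ^ 3 * d)" by linarith
  also have "\<dots> = (11 + 4 * L) * X ^ 3 * d" by (simp add: algebra_simps)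
  finally show ?thesis using 1 by linarith
qed

lemma log_bound:
  fixes \<beta> :: real and c :: nat and n :: nat
  assumes b: "0 < \<beta>" "\<beta> < 1/2" and c: "0 < c"
  defines "X \<equiv> real (2^n)"
  defines "\<delta> \<equiv> 2 powr (- (X powr \<beta>))"
  shows "log 2 (real (2 ^ (2^n) * c ^ (2^n)) / (X * \<delta>)) \<le> X * log 2 (2 * real c) + X"
proof -
  have X1: "1 \<le> X" unfolding X_def by simp
  have dpos: "0 < \<delta>" unfolding \<delta>_def by simp
  have K: "real (2 ^ (2^n) * c ^ (2^n)) = (2 * real c) ^ (2^n)" by (simp add: power_mult_distrib)
  have "log 2 ((2 * real c) ^ (2^n) / (X * \<delta>)) = log 2 ((2 * real c) ^ (2^n)) - (log 2 X + log 2 \<delta>)"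
    using c X1 dpos by (simp add: log_divide log_mult)
  also have "log 2 ((2 * real c) ^ (2^n)) = X * log 2 (2 * real c)"
    by (subst log_nat_power) (use c in \<open>simp_all add: X_def\<close>)
  also have "log 2 X = real n" unfolding X_def by (simp add: log_nat_power)
  also have "log 2 \<delta> = - (X powr \<beta>)" unfolding \<delta>_def by simp
  finally have eq: "log 2 ((2 * real c) ^ (2^n) / (X * \<delta>)) = X * log 2 (2 * real c) - real n + X powr \<beta>" by simp
  have "X powr \<beta> \<le> X powr 1" by (rule powr_mono) (use b X1 in auto)
  then have "X powr \<beta> \<le> X" using X1 by simp
  then show ?thesis unfolding K eq by simp
qed

theorem lemma1:
  shows "\<exists>C::real. \<forall>\<beta>::real. 0 < \<beta> \<and> \<beta> < 1/2 \<longrightarrow>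
    (\<exists>n0::nat. \<forall>n \<ge> n0. \<forall>(Xs :: 'x set) (p :: (bool \<times> 'x \<times> 'z::finite) pmf)
        (Q :: (bool list \<times> 'x list \<times> 'z list) pmf) (Iset :: nat set) (Aset :: nat set).
      finite Xs \<and> set_pmf p \<subseteq> UNIV \<times> Xs \<times> UNIV \<and>
      set_pmf Q \<subseteq> space (2^n) Xs \<and>
      l1dist (iid (2^n) p) Q \<le> real (2^n) * 2 powr (- (real (2^n) powr \<beta>)) \<and>
      Iset \<subseteq> Hset n (2 powr (- (real (2^n) powr \<beta>))) (iid (2^n) p) \<and>
      Aset \<subseteq> Iset \<longrightarrow>
      mutinf Q (Tsub n (Iset - Aset)) (\<lambda>w. (Tsub n Aset w, snd (snd w)))
        \<le> C * real (2^n) ^ 3 * 2 powr (- (real (2^n) powr \<beta>)))"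
proof (rule exI[where x = "11 + 4 * log 2 (2 * real CARD('z))"], intro allI impI)
  fix \<beta> :: real assume b: "0 < \<beta> \<and> \<beta> < 1/2"
  obtain n0 where n0: "\<forall>n\<ge>n0. real (2^n) * 2 powr (- (real (2^n) powr \<beta>)) \<le> 1/4"
    using n0_exists b by blast
  show "\<exists>n0::nat. \<forall>n \<ge> n0. \<forall>(Xs :: 'x set) (p :: (bool \<times> 'x \<times> 'z::finite) pmf)
        (Q :: (bool list \<times> 'x list \<times> 'z list) pmf) (Iset :: nat set) (Aset :: nat set).
      finite Xs \<and> set_pmf p \<subseteq> UNIV \<times> Xs \<times> UNIV \<and>
      set_pmf Q \<subseteq> space (2^n) Xs \<and>
      l1dist (iid (2^n) p) Q \<le> real (2^n) * 2 powr (- (real (2^n) powr \<beta>)) \<and>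
      Iset \<subseteq> Hset n (2 powr (- (real (2^n) powr \<beta>))) (iid (2^n) p) \<and>
      Aset \<subseteq> Iset \<longrightarrow>
      mutinf Q (Tsub n (Iset - Aset)) (\<lambda>w. (Tsub n Aset w, snd (snd w)))
        \<le> (11 + 4 * log 2 (2 * real CARD('z))) * real (2^n) ^ 3 * 2 powr (- (real (2^n) powr \<beta>))"
  proof (intro exI[where x = n0] allI impI)
    fix n :: nat and Xs :: "'x set" and p :: "(bool \<times> 'x \<times> 'z) pmf"
      and Q :: "(bool list \<times> 'x list \<times> 'z list) pmf" and Iset Aset :: "nat set"
    assume n: "n0 \<le> n"
    assume H: "finite Xs \<and> set_pmf p \<subseteq> UNIV \<times> Xs \<times> UNIV \<and>
      set_pmf Q \<subseteq> space (2^n) Xs \<and>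
      l1dist (iid (2^n) p) Q \<le> real (2^n) * 2 powr (- (real (2^n) powr \<beta>)) \<and>
      Iset \<subseteq> Hset n (2 powr (- (real (2^n) powr \<beta>))) (iid (2^n) p) \<and>
      Aset \<subseteq> Iset"
    define X where "X = real (2^n)"
    define \<delta> where "\<delta> = 2 powr (- (X powr \<beta>))"
    define L where "L = log 2 (2 * real CARD('z))"
    have X1: "1 \<le> X" unfolding X_def by simp
    have dpos: "0 < \<delta>" unfolding \<delta>_def by simp
    have e: "0 < X * \<delta>" "X * \<delta> \<le> 1/4" using X1 dpos n0 n unfolding X_def \<delta>_def by auto
    have "1 \<le> CARD('z)" using zero_less_card_finite[where 'a='z] by linarith
    then have "1 \<le> real CARD('z)" by simp
    then have c2: "1 \<le> 2 * real CARD('z)" by linarith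
    have L0: "0 \<le> L" unfolding L_def using c2 by simp
    have cr: "mutinf Q (Tsub n (Iset - Aset)) (\<lambda>w. (Tsub n Aset w, snd (snd w)))
     \<le> 3 * \<delta> * real (2^n) + 2 * (2 * (X * \<delta>) * log 2 (real (2 ^ (2^n) * CARD('z) ^ (2^n)) / (X * \<delta>)) + 2 * (X * \<delta>))"
    proof (rule core[where Xs = Xs and p = p])
      show "finite Xs" "set_pmf p \<subseteq> UNIV \<times> Xs \<times> UNIV" "set_pmf Q \<subseteq> space (2^n) Xs" "Aset \<subseteq> Iset"
        using H by blast+
      show "l1dist (iid (2^n) p) Q \<le> X * \<delta>" using H unfolding X_def \<delta>_def by blast
      show "Iset \<subseteq> Hset n \<delta> (iid (2^n) p)" using H unfolding X_def \<delta>_def by blast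
    qed (use e dpos in auto)
    have lb: "log 2 (real (2 ^ (2^n) * CARD('z) ^ (2^n)) / (X * \<delta>)) \<le> X * L + X"
      unfolding L_def X_def \<delta>_def by (rule log_bound) (use b in auto)
    have "3 * \<delta> * X + 2 * (2 * (X * \<delta>) * log 2 (real (2 ^ (2^n) * CARD('z) ^ (2^n)) / (X * \<delta>)) + 2 * (X * \<delta>))
       \<le> (11 + 4 * L) * X ^ 3 * \<delta>"
      by (rule arith_final[OF X1 _ L0 lb]) (use dpos in simp)
    then show "mutinf Q (Tsub n (Iset - Aset)) (\<lambda>w. (Tsub n Aset w, snd (snd w)))
        \<le> (11 + 4 * log 2 (2 * real CARD('z))) * real (2^n) ^ 3 * 2 powr (- (real (2^n) powr \<beta>))"
      using cr unfolding X_def \<delta>_def L_def by linarith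
  qed
qed


end
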